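(* Fix a classifier $f_\theta$, a sequence of queueing systems and a sequence of feasible policies, and suppose Assumptions (DGP), (HT) and (UI) hold. Then for every predicted class $l\in[K]$, as $n\to\infty$, \[ \tilde L_l^n\to\tilde L_l:=\tilde R_l\circ\lambda e+\sum_{k=1}^K\frac{p_k}{\mu_k}q_{kl}\tilde A_0,\qquad \tilde L_+^n\to\tilde L_+:=\tilde V_0\circ\lambda e+\sum_{k=1}^K\frac{p_k}{\mu_k}\tilde A_0, \] uniformly on $[0,1]$, where $e$ is the identity on $[0,1]$. Moreover, for every $n$ and $t\in[0,1]$, \[ \hat L_l^n(nt)=\lambda^n\sum_{k=1}^K\frac{p_k^n}{\mu_k^n}q_{kl}^n\,nt+n^{1/2}\tilde L_l^n(t)+o(n^{1/2}),\qquad \hat L_+^n(nt)=\lambda^n\sum_{k=1}^K\frac{p_k^n}{\mu_k^n}\,nt+n^{1/2}\tilde L_+^n(t)+o(n^{1/2}). \]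
   Context: Model. For each $n$, system $n$ operates on $[0,n]$; jobs $i=1,2,\dots$ arrive in a single stream with interarrival times $u_i^n$, features $X_i^n\in\mathbb R^d$, one-hot true class $Y_i^n\in\{0,1\}^K$, service requirement $v_i^n>0$, and one-hot predicted class $\hat Y_i^n=f_\theta(X_i^n)$. Let $\lambda^n=1/E[u_1^n]$, $p_k^n=P(Y_{1k}^n=1)$, $1/\mu_k^n=E[v_1^n\mid Y_{1k}^n=1]$, $q_{kl}^n=P(\hat Y_{1l}^n=1\mid Y_{1k}^n=1)$, $A_0^n(t)=\max\{m:\sum_{i\le m}u_i^n\le t\}$. Assumption (DGP): for each $n$, $\{(u_i^n,v_i^n,X_i^n,Y_i^n)\}_i$ i.i.d.; $\{u_i^n\}$ independent of $\{(v_i^n,X_i^n,Y_i^n)\}$; $v_i^n\perp X_i^n\mid Y_i^n$. Assumption (HT): there exist $p_k,q_{kl}\in[0,1]$, positive $\lambda,\mu_k$ with $\sum_kp_kq_{kl}>0$ for all $l$, $\lambda\sum_kp_k/\mu_k=1$, and $n^{1/2}(\lambda^n-\lambda),n^{1/2}(\mu_k^n-\mu_k),n^{1/2}(p_k^n-p_k),n^{1/2}(q_{kl}^n-q_{kl})\to0$. Assumption (UI): $E[(u_1^n)^2],E[(v_1^n)^2],E[(X_1^n)^2]<\infty$; $E[(u_1^n)^2\mathbf 1\{u_1^n>x\}]\le g_u(x)$, $E[(v_1^n)^2\mathbf 1\{v_1^n>x\}]\le g_v(x)$ with fixed $g_u,g_v\to0$; $E[(u_1^n)^2]\to\alpha_u\in(0,\infty)$,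 $E[(v_1^n)^2\mid Y_{1k}^n=1]\to\alpha_{v,k}\in(0,\infty)$. Primitive diffusion-scaled processes on $[0,1]$: $\tilde A_0^n(t)=n^{-1/2}[A_0^n(nt)-\lambda^nnt]$; $\tilde V_0^n(t)=n^{-1/2}[\sum_{i\le\lfloor nt\rfloor}v_i^n-\sum_k\frac{p_k^n}{\mu_k^n}nt]$; $\tilde R_l^n(t)=n^{-1/2}[\sum_{i\le\lfloor nt\rfloor}\hat Y_{il}^nv_i^n-\sum_k\frac{p_k^n}{\mu_k^n}q_{kl}^nnt]$. These are realized on a common probability space (distributions preserved) on which they converge uniformly on $[0,1]$ almost surely to limits $\tilde A_0,\tilde V_0,\tilde R_l$ (jointly a multidimensional Brownian motion); all statements hold almost surely there. Input processes: $\hat L_l^n(t)=\sum_{i=1}^{A_0^n(t)}\hat Y_{il}^nv_i^n$ (total service requested by jobs predicted as $l$ arriving by $t$), $\hat L_+^n=\sum_l\hat L_l^n$, $\tilde L_l^n(t)=n^{-1/2}[\hat L_l^n(nt)-\lambda^n\sum_k\frac{p_k^n}{\mu_k^n}q_{kl}^nnt]$, $\tilde L_+^n=\sum_l\tilde L_l^n$. A feasible policy is a non-anticipating rule choosing which predicted class to serve (preemption allowed). $o(n^{1/2})$ denotes terms whose sup over $t\in[0,1]$ divided by $n^{1/2}$ tends to $0$. *)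

theory Defs
  imports "HOL-Probability.Probability"
begin

text \<open>Jobs are indexed from 0 (Isabelle job i corresponds to paper job i+1).
Classes are the elements of a finite type 'k (so K = CARD('k)); the one-hot
vector Y_i corresponds to the label Y i, with Y_{ik} = 1 iff Y i = k.\<close>

definition lam_n :: "'a measure \<Rightarrow> (nat \<Rightarrow> nat \<Rightarrow> 'a \<Rightarrow> real) \<Rightarrow> nat \<Rightarrow> real" where
  "lam_n M u n = 1 / integral\<^sup>L M (u n 0)"

definition p_n :: "'a measure \<Rightarrow> (nat \<Rightarrow> nat \<Rightarrow> 'a \<Rightarrow> 'k) \<Rightarrow> nat \<Rightarrow> 'k \<Rightarrow> real" where
  "p_n M Y n k = measure M {\<omega> \<in> space M. Y n 0 \<omega> = k}"

text \<open>1/mu_k^n = E[v | Y = k] = E[v 1{Y=k}] / P(Y=k).\<close>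
definition mu_n :: "'a measure \<Rightarrow> (nat \<Rightarrow> nat \<Rightarrow> 'a \<Rightarrow> real) \<Rightarrow> (nat \<Rightarrow> nat \<Rightarrow> 'a \<Rightarrow> 'k)
    \<Rightarrow> nat \<Rightarrow> 'k \<Rightarrow> real" where
  "mu_n M v Y n k = p_n M Y n k /
      integral\<^sup>L M (\<lambda>\<omega>. v n 0 \<omega> * indicator {\<omega>. Y n 0 \<omega> = k} \<omega>)"

definition q_n :: "'a measure \<Rightarrow> ('x \<Rightarrow> 'k) \<Rightarrow> (nat \<Rightarrow> nat \<Rightarrow> 'a \<Rightarrow> 'x) \<Rightarrow> (nat \<Rightarrow> nat \<Rightarrow> 'a \<Rightarrow> 'k)
    \<Rightarrow> nat \<Rightarrow> 'k \<Rightarrow> 'k \<Rightarrow> real" where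
  "q_n M f X Y n k l =
     measure M {\<omega> \<in> space M. Y n 0 \<omega> = k \<and> f (X n 0 \<omega>) = l} / p_n M Y n k"

definition A0 :: "(nat \<Rightarrow> nat \<Rightarrow> 'a \<Rightarrow> real) \<Rightarrow> nat \<Rightarrow> real \<Rightarrow> 'a \<Rightarrow> nat" where
  "A0 u n s \<omega> = (GREATEST m. (\<Sum>i<m. u n i \<omega>) \<le> s)"

definition Atil :: "'a measure \<Rightarrow> (nat \<Rightarrow> nat \<Rightarrow> 'a \<Rightarrow> real) \<Rightarrow> nat \<Rightarrow> real \<Rightarrow> 'a \<Rightarrow> real" where
  "Atil M u n t \<omega> = (real (A0 u n (real n * t) \<omega>) - lam_n M u n * real n * t) / sqrt (real n)"

definition V0til :: "'a measure \<Rightarrow> (nat \<Rightarrow> nat \<Rightarrow> 'a \<Rightarrow> real) \<Rightarrow> (nat \<Rightarrow> nat \<Rightarrow> 'a \<Rightarrow> 'k::finite)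
    \<Rightarrow> nat \<Rightarrow> real \<Rightarrow> 'a \<Rightarrow> real" where
  "V0til M v Y n t \<omega> =
     ((\<Sum>i<nat \<lfloor>real n * t\<rfloor>. v n i \<omega>)
      - (\<Sum>k\<in>UNIV. p_n M Y n k / mu_n M v Y n k) * real n * t) / sqrt (real n)"

definition Rtil :: "'a measure \<Rightarrow> ('x \<Rightarrow> 'k::finite) \<Rightarrow> (nat \<Rightarrow> nat \<Rightarrow> 'a \<Rightarrow> real)
    \<Rightarrow> (nat \<Rightarrow> nat \<Rightarrow> 'a \<Rightarrow> 'x) \<Rightarrow> (nat \<Rightarrow> nat \<Rightarrow> 'a \<Rightarrow> 'k) \<Rightarrow> nat \<Rightarrow> 'k \<Rightarrow> real \<Rightarrow> 'a \<Rightarrow> real" where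
  "Rtil M f v X Y n l t \<omega> =
     ((\<Sum>i<nat \<lfloor>real n * t\<rfloor>. (if f (X n i \<omega>) = l then v n i \<omega> else 0))
      - (\<Sum>k\<in>UNIV. p_n M Y n k / mu_n M v Y n k * q_n M f X Y n k l) * real n * t)
     / sqrt (real n)"

definition Lhat :: "('x \<Rightarrow> 'k) \<Rightarrow> (nat \<Rightarrow> nat \<Rightarrow> 'a \<Rightarrow> real) \<Rightarrow> (nat \<Rightarrow> nat \<Rightarrow> 'a \<Rightarrow> real)
    \<Rightarrow> (nat \<Rightarrow> nat \<Rightarrow> 'a \<Rightarrow> 'x) \<Rightarrow> nat \<Rightarrow> 'k \<Rightarrow> real \<Rightarrow> 'a \<Rightarrow> real" where
  "Lhat f u v X n l s \<omega> = (\<Sum>i<A0 u n s \<omega>. (if f (X n i \<omega>) = l then v n i \<omega> else 0))"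

definition Lhat_plus :: "('x \<Rightarrow> 'k::finite) \<Rightarrow> (nat \<Rightarrow> nat \<Rightarrow> 'a \<Rightarrow> real) \<Rightarrow> (nat \<Rightarrow> nat \<Rightarrow> 'a \<Rightarrow> real)
    \<Rightarrow> (nat \<Rightarrow> nat \<Rightarrow> 'a \<Rightarrow> 'x) \<Rightarrow> nat \<Rightarrow> real \<Rightarrow> 'a \<Rightarrow> real" where
  "Lhat_plus f u v X n s \<omega> = (\<Sum>l\<in>UNIV. Lhat f u v X n l s \<omega>)"

definition Ltil :: "'a measure \<Rightarrow> ('x \<Rightarrow> 'k::finite) \<Rightarrow> (nat \<Rightarrow> nat \<Rightarrow> 'a \<Rightarrow> real) \<Rightarrow> (nat \<Rightarrow> nat \<Rightarrow> 'a \<Rightarrow> real)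
    \<Rightarrow> (nat \<Rightarrow> nat \<Rightarrow> 'a \<Rightarrow> 'x) \<Rightarrow> (nat \<Rightarrow> nat \<Rightarrow> 'a \<Rightarrow> 'k) \<Rightarrow> nat \<Rightarrow> 'k \<Rightarrow> real \<Rightarrow> 'a \<Rightarrow> real" where
  "Ltil M f u v X Y n l t \<omega> =
     (Lhat f u v X n l (real n * t) \<omega>
      - lam_n M u n * (\<Sum>k\<in>UNIV. p_n M Y n k / mu_n M v Y n k * q_n M f X Y n k l) * real n * t)
     / sqrt (real n)"

definition Ltil_plus :: "'a measure \<Rightarrow> ('x \<Rightarrow> 'k::finite) \<Rightarrow> (nat \<Rightarrow> nat \<Rightarrow> 'a \<Rightarrow> real) \<Rightarrow> (nat \<Rightarrow> nat \<Rightarrow> 'a \<Rightarrow> real)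
    \<Rightarrow> (nat \<Rightarrow> nat \<Rightarrow> 'a \<Rightarrow> 'x) \<Rightarrow> (nat \<Rightarrow> nat \<Rightarrow> 'a \<Rightarrow> 'k) \<Rightarrow> nat \<Rightarrow> real \<Rightarrow> 'a \<Rightarrow> real" where
  "Ltil_plus M f u v X Y n t \<omega> = (\<Sum>l\<in>UNIV. Ltil M f u v X Y n l t \<omega>)"

end

theory Submission imports Defs "HOL-Real_Asymp.Real_Asymp" begin

lemma sqrt_conv_imp:
  fixes x :: "nat \<Rightarrow> real"
  assumes "(\<lambda>n. sqrt (real n) * (x n - a)) \<longlonglongrightarrow> 0"
  shows "x \<longlonglongrightarrow> a"
proof -
  have i: "(\<lambda>n. 1 / sqrt (real n)) \<longlonglongrightarrow> 0" by real_asymp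
  have "(\<lambda>n. sqrt (real n) * (x n - a) * (1 / sqrt (real n))) \<longlonglongrightarrow> 0 * 0"
    by (intro tendsto_mult assms i)
  then have "(\<lambda>n. sqrt (real n) * (x n - a) * (1 / sqrt (real n))) \<longlonglongrightarrow> 0" by simp
  moreover have "\<forall>\<^sub>F n in sequentially. sqrt (real n) * (x n - a) * (1 / sqrt (real n)) = x n - a"
      using eventually_gt_at_top[of "0::nat"] by eventually_elim simp
  ultimately have "(\<lambda>n. x n - a) \<longlonglongrightarrow> 0" by (rule Lim_transform_eventually)
  then show ?thesis by (simp add: LIM_zero_iff)
qed

lemma ident:
  fixes w :: "nat \<Rightarrow> real"
  assumes "n > 0"
  shows "(\<Sum>i<a. w i) - lnn * cc * real n * t
    = (\<Sum>i<nat \<lfloor>real n * (lnn * t + ((real a - lnn * real n * t) / sqrt (real n)) / sqrt (real n))\<rfloor>. w i)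
       - cc * real n * (lnn * t + ((real a - lnn * real n * t) / sqrt (real n)) / sqrt (real n))
     + sqrt (real n) * (cc * ((real a - lnn * real n * t) / sqrt (real n)))"
proof -
  have sn: "sqrt (real n) * sqrt (real n) = real n" using assms by simp
  have sp: "sqrt (real n) > 0" using assms by simp
  have e: "real n * (lnn * t + ((real a - lnn * real n * t) / sqrt (real n)) / sqrt (real n)) = real a"
    using assms sn sp by (simp add: field_simps)
  show ?thesis unfolding e using sp by (simp add: field_simps)
qed

lemma key_ul:
  fixes S At :: "nat \<Rightarrow> real \<Rightarrow> real" and Slim Alim :: "real \<Rightarrow> real" and L :: "nat \<Rightarrow> real \<Rightarrow> real"
    and ln cn :: "nat \<Rightarrow> real" and lam c :: real
  assumes S_ul: "\<forall>T. uniform_limit {0..T} S Slim sequentially"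
  and Slim_c: "continuous_on {0..} Slim"
  and A_ul: "uniform_limit {0..1} At Alim sequentially"
  and A_c: "continuous_on {0..} Alim"
  and ln: "ln \<longlonglongrightarrow> lam" and cn: "cn \<longlonglongrightarrow> c" and lam0: "lam \<ge> 0"
  and L_eq: "\<And>n t. n > 0 \<Longrightarrow> t \<in> {0..1} \<Longrightarrow> L n t = S n (ln n * t + At n t / sqrt n) + cn n * At n t"
  and s_nonneg: "\<And>n t. n > 0 \<Longrightarrow> t \<in> {0..1} \<Longrightarrow> ln n * t + At n t / sqrt n \<ge> 0"
  shows "uniform_limit {0..1} L (\<lambda>t. Slim (lam*t) + c * Alim t) sequentially"
  unfolding uniform_limit_iff
proof (intro allI impI)
  fix e :: real assume e: "e > 0"
  have "compact (Alim ` {0..1})"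
    by (rule compact_continuous_image) (auto intro: continuous_on_subset[OF A_c])
  then obtain B where B: "B > 0" "\<And>t. t \<in> {0..1} \<Longrightarrow> norm (Alim t) \<le> B"
    using compact_imp_bounded bounded_pos by (metis image_eqI)
  define T where "T = lam + 2"
  have "compact {0..T}" by simp
  moreover have "continuous_on {0..T} Slim" by (rule continuous_on_subset[OF Slim_c]) auto
  ultimately have "uniformly_continuous_on {0..T} Slim" using compact_uniformly_continuous by blast
  then obtain d where d: "d > 0" "\<And>x y. x \<in> {0..T} \<Longrightarrow> y \<in> {0..T} \<Longrightarrow> dist y x < d \<Longrightarrow> dist (Slim y) (Slim x) < e/3"
    unfolding uniformly_continuous_on_def using e by (metis divide_pos_pos zero_less_numeral)
  define d' where "d' = min d 1 / 2"
  have d': "d' > 0" using d by (simp add: d'_def)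
  have ev1: "\<forall>\<^sub>F n in sequentially. \<forall>t\<in>{0..1}. dist (At n t) (Alim t) < min 1 (e / (6 * (\<bar>c\<bar> + 1)))"
  proof -
    have "min 1 (e / (6 * (\<bar>c\<bar> + 1))) > 0" using e by (simp add: add_pos_nonneg)
    then show ?thesis using A_ul unfolding uniform_limit_iff by blast
  qed
  have ev2: "\<forall>\<^sub>F n in sequentially. dist (ln n) lam < d'"
    using ln d' by (rule tendstoD)
  have "(\<lambda>n. (B + 1) * (1 / sqrt (real n))) \<longlonglongrightarrow> (B+1) * 0"
    by (intro tendsto_mult tendsto_const) real_asymp
  then have "(\<lambda>n. (B + 1) * (1 / sqrt (real n))) \<longlonglongrightarrow> 0" by (metis mult_zero_right)
  then have ev3: "\<forall>\<^sub>F n in sequentially. dist ((B + 1) * (1 / sqrt (real n))) 0 < d'"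
    using d' by (rule tendstoD)
  have ev4: "\<forall>\<^sub>F n in sequentially. \<forall>x\<in>{0..T}. dist (S n x) (Slim x) < e/3"
    using S_ul e unfolding uniform_limit_iff by (meson divide_pos_pos zero_less_numeral)
  have ev5: "\<forall>\<^sub>F n in sequentially. dist (cn n) c < e / (6 * (B + 1))"
    using cn e B by (intro tendstoD) auto
  show "\<forall>\<^sub>F n in sequentially. \<forall>t\<in>{0..1}. dist (L n t) (Slim (lam*t) + c * Alim t) < e"
    using ev1 ev2 ev3 ev4 ev5 eventually_gt_at_top[of "0::nat"]
  proof eventually_elim
    case (elim n)
    show ?case
    proof
      fix t :: real assume t: "t \<in> {0..1}"
      have sp: "sqrt (real n) > 0" using elim by simp
      have A1: "\<bar>At n t - Alim t\<bar> < 1" and A2: "\<bar>At n t - Alim t\<bar> < e / (6 * (\<bar>c\<bar> + 1))"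
        using elim(1) t by (auto simp: dist_real_def)
      have AB: "\<bar>At n t\<bar> \<le> B + 1" using A1 B(2)[OF t] by auto
      have "\<bar>At n t / sqrt n\<bar> = \<bar>At n t\<bar> * (1 / sqrt n)" using sp by (simp add: abs_div)
      also have "\<dots> \<le> (B+1) * (1 / sqrt n)" using AB sp by (intro mult_right_mono) auto
      also have "\<dots> < d'" using elim(3) sp B by (simp add: dist_real_def)
      finally have q1: "\<bar>At n t / sqrt n\<bar> < d'" .
      have "\<bar>ln n * t - lam * t\<bar> = \<bar>ln n - lam\<bar> * t" using t by (simp add: abs_mult left_diff_distrib[symmetric])
      also have "\<dots> \<le> \<bar>ln n - lam\<bar>" using t by (intro mult_left_le) auto
      finally have q2: "\<bar>ln n * t - lam * t\<bar> < d'" using elim(2) by (simp add: dist_real_def)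
      define s where "s = ln n * t + At n t / sqrt n"
      have sd: "\<bar>s - lam * t\<bar> < 2 * d'" using q1 q2 unfolding s_def by linarith
      have s0: "s \<ge> 0" using s_nonneg[OF elim(6) t] by (simp add: s_def)
      have lt: "lam * t \<in> {0..T}" using t lam0 mult_left_le[of t lam] by (auto simp: T_def)
      have ltl: "lam * t \<le> lam" using t lam0 mult_left_le[of t lam] by auto
      have sT: "s \<in> {0..T}" using sd s0 lt ltl unfolding d'_def T_def by auto
      have c1: "\<bar>Slim s - Slim (lam * t)\<bar> < e/3"
        using d(2)[OF lt sT] sd unfolding d'_def dist_real_def by auto
      have c2: "\<bar>S n s - Slim s\<bar> < e/3" using elim(4) sT by (auto simp: dist_real_def)
      have "\<bar>cn n * At n t - c * Alim t\<bar> = \<bar>(cn n - c) * At n t + c * (At n t - Alim t)\<bar>"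
        by (simp add: algebra_simps)
      also have "\<dots> \<le> \<bar>cn n - c\<bar> * \<bar>At n t\<bar> + \<bar>c\<bar> * \<bar>At n t - Alim t\<bar>"
        by (metis abs_mult abs_triangle_ineq)
      also have "\<dots> \<le> e / (6 * (B + 1)) * (B + 1) + (\<bar>c\<bar> + 1) * (e / (6 * (\<bar>c\<bar> + 1)))"
        using elim(5) AB A2 by (intro add_mono mult_mono) (auto simp: dist_real_def)
      also have "\<dots> = e/3"
      proof -
        have "e / (6 * (B + 1)) * (B + 1) = e/6" using B by (simp add: field_simps)
        moreover have "(\<bar>c\<bar> + 1) * (e / (6 * (\<bar>c\<bar> + 1))) = e/6"
        proof -
          have "\<bar>c\<bar> + 1 > 0" by simp
          then show ?thesis by (simp add: field_simps)
        qed
        ultimately show ?thesis by linarith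
      qed
      finally have c3: "\<bar>cn n * At n t - c * Alim t\<bar> \<le> e/3" .
      have "L n t = S n s + cn n * At n t" using L_eq[OF elim(6) t] by (simp add: s_def)
      then show "dist (L n t) (Slim (lam*t) + c * Alim t) < e"
        using c1 c2 c3 unfolding dist_real_def by linarith
    qed
  qed
qed

lemma ident2:
  fixes w :: "nat \<Rightarrow> real"
  assumes "n > 0"
  shows "((\<Sum>i<a. w i) - lnn * cc * real n * t) / sqrt (real n)
    = ((\<Sum>i<nat \<lfloor>real n * (lnn * t + ((real a - lnn * real n * t) / sqrt (real n)) / sqrt (real n))\<rfloor>. w i)
       - cc * real n * (lnn * t + ((real a - lnn * real n * t) / sqrt (real n)) / sqrt (real n))) / sqrt (real n)
     + cc * ((real a - lnn * real n * t) / sqrt (real n))"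
proof -
  have sp: "sqrt (real n) > 0" using assms by simp
  show ?thesis unfolding ident[OF assms, of w a lnn cc t] using sp by (simp add: add_divide_distrib)
qed

lemma snn:
  assumes "n > 0"
  shows "lnn * t + ((real a - lnn * real n * t) / sqrt (real n)) / sqrt (real n) \<ge> 0"
proof -
  have sn: "sqrt (real n) * sqrt (real n) = real n" using assms by simp
  have sp: "sqrt (real n) > 0" using assms by simp
  have e: "lnn * t + ((real a - lnn * real n * t) / sqrt (real n)) / sqrt (real n) = real a / real n"
    using assms sn sp by (simp add: field_simps)
  show ?thesis unfolding e by simp
qed

lemma qsum:
  fixes M :: "'a measure" and f :: "'x \<Rightarrow> 'k::finite"
  assumes M: "prob_space M"
    and fX: "\<And>n i. (\<lambda>\<omega>. f (X n i \<omega>)) \<in> M \<rightarrow>\<^sub>M count_space UNIV"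
    and Y_meas: "\<And>n i. Y n i \<in> M \<rightarrow>\<^sub>M count_space UNIV"
  shows "p_n M Y n k * (\<Sum>l\<in>UNIV. q_n M f X Y n k l) = p_n M Y n k"
proof (cases "p_n M Y n k = 0")
  case True then show ?thesis by simp
next
  case False
  interpret prob_space M by (rule M)
  let ?A = "\<lambda>l. {\<omega> \<in> space M. Y n 0 \<omega> = k \<and> f (X n 0 \<omega>) = l}"
  have sets: "?A l \<in> sets M" for l
  proof -
    have "?A l = (Y n 0 -` {k} \<inter> space M) \<inter> ((\<lambda>\<omega>. f (X n 0 \<omega>)) -` {l} \<inter> space M)" by auto
    also have "\<dots> \<in> sets M"
      using measurable_sets[OF Y_meas, of "{k}" n 0] measurable_sets[OF fX, of "{l}" n 0] by auto
    finally show ?thesis .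
  qed
  have "(\<Sum>l\<in>UNIV. measure M (?A l)) = measure M (\<Union>l\<in>UNIV. ?A l)"
    by (rule finite_measure_finite_Union[symmetric]) (auto simp: sets disjoint_family_on_def)
  also have "(\<Union>l\<in>UNIV. ?A l) = {\<omega> \<in> space M. Y n 0 \<omega> = k}" by auto
  finally have "(\<Sum>l\<in>UNIV. measure M (?A l)) = p_n M Y n k" by (simp add: p_n_def)
  then have "(\<Sum>l\<in>UNIV. q_n M f X Y n k l) = 1"
    using False by (simp add: q_n_def sum_divide_distrib[symmetric])
  then show ?thesis by simp
qed

theorem mainTheorem5:
  fixes M :: "'a measure"
    and f :: "real ^ 'd \<Rightarrow> 'k::finite"
    and u v :: "nat \<Rightarrow> nat \<Rightarrow> 'a \<Rightarrow> real"
    and X :: "nat \<Rightarrow> nat \<Rightarrow> 'a \<Rightarrow> real ^ 'd"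
    and Y :: "nat \<Rightarrow> nat \<Rightarrow> 'a \<Rightarrow> 'k"
    and lam :: real and p mu :: "'k \<Rightarrow> real" and q :: "'k \<Rightarrow> 'k \<Rightarrow> real"
    and g_u g_v :: "real \<Rightarrow> real" and alpha_u :: real and alpha_v :: "'k \<Rightarrow> real"
    and A0lim V0lim :: "real \<Rightarrow> 'a \<Rightarrow> real" and Rlim :: "'k \<Rightarrow> real \<Rightarrow> 'a \<Rightarrow> real"
  assumes M: "prob_space M"
    and f_meas: "f \<in> borel \<rightarrow>\<^sub>M count_space UNIV"
    \<comment> \<open>basic measurability and sign conditions\<close>
    and u_meas: "\<And>n i. u n i \<in> borel_measurable M"
    and v_meas: "\<And>n i. v n i \<in> borel_measurable M"
    and X_meas: "\<And>n i. X n i \<in> borel_measurable M"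
    and Y_meas: "\<And>n i. Y n i \<in> M \<rightarrow>\<^sub>M count_space UNIV"
    and u_nonneg: "\<And>n i \<omega>. \<omega> \<in> space M \<Longrightarrow> u n i \<omega> \<ge> 0"
    and v_pos: "\<And>n i \<omega>. \<omega> \<in> space M \<Longrightarrow> v n i \<omega> > 0"
    \<comment> \<open>(DGP)\<close>
    and iid_indep: "\<And>n. prob_space.indep_vars M
        (\<lambda>_. (borel :: real measure) \<Otimes>\<^sub>M (borel :: real measure) \<Otimes>\<^sub>M (borel :: (real ^ 'd) measure)
              \<Otimes>\<^sub>M (count_space UNIV :: 'k measure))
        (\<lambda>i \<omega>. (u n i \<omega>, v n i \<omega>, X n i \<omega>, Y n i \<omega>)) UNIV"
    and iid_ident: "\<And>n i. distr M
        ((borel :: real measure) \<Otimes>\<^sub>M (borel :: real measure) \<Otimes>\<^sub>M (borel :: (real ^ 'd) measure)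
              \<Otimes>\<^sub>M (count_space UNIV :: 'k measure))
        (\<lambda>\<omega>. (u n i \<omega>, v n i \<omega>, X n i \<omega>, Y n i \<omega>))
      = distr M
        ((borel :: real measure) \<Otimes>\<^sub>M (borel :: real measure) \<Otimes>\<^sub>M (borel :: (real ^ 'd) measure)
              \<Otimes>\<^sub>M (count_space UNIV :: 'k measure))
        (\<lambda>\<omega>. (u n 0 \<omega>, v n 0 \<omega>, X n 0 \<omega>, Y n 0 \<omega>))"
    and u_indep: "\<And>n A B. A \<in> sets (Pi\<^sub>M UNIV (\<lambda>_. (borel :: real measure))) \<Longrightarrow>
        B \<in> sets (Pi\<^sub>M UNIV (\<lambda>_. (borel :: real measure) \<Otimes>\<^sub>M (borel :: (real ^ 'd) measure)
              \<Otimes>\<^sub>M (count_space UNIV :: 'k measure))) \<Longrightarrow>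
        measure M {\<omega> \<in> space M. (\<lambda>i. u n i \<omega>) \<in> A \<and> (\<lambda>i. (v n i \<omega>, X n i \<omega>, Y n i \<omega>)) \<in> B}
        = measure M {\<omega> \<in> space M. (\<lambda>i. u n i \<omega>) \<in> A}
          * measure M {\<omega> \<in> space M. (\<lambda>i. (v n i \<omega>, X n i \<omega>, Y n i \<omega>)) \<in> B}"
    and cond_indep: "\<And>n i k B C. B \<in> sets (borel :: real measure) \<Longrightarrow> C \<in> sets (borel :: (real ^ 'd) measure) \<Longrightarrow>
        measure M {\<omega> \<in> space M. v n i \<omega> \<in> B \<and> X n i \<omega> \<in> C \<and> Y n i \<omega> = k}
          * measure M {\<omega> \<in> space M. Y n i \<omega> = k}
        = measure M {\<omega> \<in> space M. v n i \<omega> \<in> B \<and> Y n i \<omega> = k}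
          * measure M {\<omega> \<in> space M. X n i \<omega> \<in> C \<and> Y n i \<omega> = k}"
    \<comment> \<open>(HT)\<close>
    and p_range: "\<And>k. 0 \<le> p k \<and> p k \<le> 1"
    and q_range: "\<And>k l. 0 \<le> q k l \<and> q k l \<le> 1"
    and lam_pos: "lam > 0"
    and mu_pos: "\<And>k. mu k > 0"
    and pq_pos: "\<And>l. (\<Sum>k\<in>UNIV. p k * q k l) > 0"
    and heavy: "lam * (\<Sum>k\<in>UNIV. p k / mu k) = 1"
    and lam_conv: "(\<lambda>n. sqrt (real n) * (lam_n M u n - lam)) \<longlonglongrightarrow> 0"
    and mu_conv: "\<And>k. (\<lambda>n. sqrt (real n) * (mu_n M v Y n k - mu k)) \<longlonglongrightarrow> 0"
    and p_conv: "\<And>k. (\<lambda>n. sqrt (real n) * (p_n M Y n k - p k)) \<longlonglongrightarrow> 0"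
    and q_conv: "\<And>k l. (\<lambda>n. sqrt (real n) * (q_n M f X Y n k l - q k l)) \<longlonglongrightarrow> 0"
    \<comment> \<open>(UI)\<close>
    and u_sq: "\<And>n. integrable M (\<lambda>\<omega>. (u n 0 \<omega>)\<^sup>2)"
    and v_sq: "\<And>n. integrable M (\<lambda>\<omega>. (v n 0 \<omega>)\<^sup>2)"
    and X_sq: "\<And>n. integrable M (\<lambda>\<omega>. (norm (X n 0 \<omega>))\<^sup>2)"
    and u_ui: "\<And>n x. integral\<^sup>L M (\<lambda>\<omega>. (u n 0 \<omega>)\<^sup>2 * indicator {\<omega>. u n 0 \<omega> > x} \<omega>) \<le> g_u x"
    and v_ui: "\<And>n x. integral\<^sup>L M (\<lambda>\<omega>. (v n 0 \<omega>)\<^sup>2 * indicator {\<omega>. v n 0 \<omega> > x} \<omega>) \<le> g_v x"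
    and g_u_lim: "(g_u \<longlongrightarrow> 0) at_top"
    and g_v_lim: "(g_v \<longlongrightarrow> 0) at_top"
    and u_2nd: "(\<lambda>n. integral\<^sup>L M (\<lambda>\<omega>. (u n 0 \<omega>)\<^sup>2)) \<longlonglongrightarrow> alpha_u"
    and alpha_u_pos: "0 < alpha_u"
    and v_2nd: "\<And>k. (\<lambda>n. integral\<^sup>L M (\<lambda>\<omega>. (v n 0 \<omega>)\<^sup>2 * indicator {\<omega>. Y n 0 \<omega> = k} \<omega>)
                         / p_n M Y n k) \<longlonglongrightarrow> alpha_v k"
    and alpha_v_pos: "\<And>k. 0 < alpha_v k"
    \<comment> \<open>a.s. uniform convergence of the primitive processes (Skorokhod realization)
        to limits with continuous sample paths\<close>
    and prim_conv: "AE \<omega> in M.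
        (\<forall>T. uniform_limit {0..T} (\<lambda>n t. Atil M u n t \<omega>) (\<lambda>t. A0lim t \<omega>) sequentially)
      \<and> (\<forall>T. uniform_limit {0..T} (\<lambda>n t. V0til M v Y n t \<omega>) (\<lambda>t. V0lim t \<omega>) sequentially)
      \<and> (\<forall>l T. uniform_limit {0..T} (\<lambda>n t. Rtil M f v X Y n l t \<omega>) (\<lambda>t. Rlim l t \<omega>) sequentially)
      \<and> continuous_on {0..} (\<lambda>t. A0lim t \<omega>)
      \<and> continuous_on {0..} (\<lambda>t. V0lim t \<omega>)
      \<and> (\<forall>l. continuous_on {0..} (\<lambda>t. Rlim l t \<omega>))"
  shows
    "(AE \<omega> in M.
        (\<forall>l. uniform_limit {0..1} (\<lambda>n t. Ltil M f u v X Y n l t \<omega>)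
              (\<lambda>t. Rlim l (lam * t) \<omega> + (\<Sum>k\<in>UNIV. p k / mu k * q k l) * A0lim t \<omega>) sequentially)
      \<and> uniform_limit {0..1} (\<lambda>n t. Ltil_plus M f u v X Y n t \<omega>)
              (\<lambda>t. V0lim (lam * t) \<omega> + (\<Sum>k\<in>UNIV. p k / mu k) * A0lim t \<omega>) sequentially)
   \<and> (\<forall>\<omega>\<in>space M.
        (\<forall>l. \<exists>r :: nat \<Rightarrow> real \<Rightarrow> real.
           (\<forall>\<epsilon>>0. eventually (\<lambda>n. \<forall>t\<in>{0..1}. \<bar>r n t\<bar> \<le> \<epsilon> * sqrt (real n)) sequentially)
         \<and> (\<forall>n. \<forall>t\<in>{0..1}. Lhat f u v X n l (real n * t) \<omega>
               = lam_n M u n * (\<Sum>k\<in>UNIV. p_n M Y n k / mu_n M v Y n k * q_n M f X Y n k l) * (real n * t)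
                 + sqrt (real n) * Ltil M f u v X Y n l t \<omega> + r n t))
      \<and> (\<exists>r :: nat \<Rightarrow> real \<Rightarrow> real.
           (\<forall>\<epsilon>>0. eventually (\<lambda>n. \<forall>t\<in>{0..1}. \<bar>r n t\<bar> \<le> \<epsilon> * sqrt (real n)) sequentially)
         \<and> (\<forall>n. \<forall>t\<in>{0..1}. Lhat_plus f u v X n (real n * t) \<omega>
               = lam_n M u n * (\<Sum>k\<in>UNIV. p_n M Y n k / mu_n M v Y n k) * (real n * t)
                 + sqrt (real n) * Ltil_plus M f u v X Y n t \<omega> + r n t)))"
proof -
  have fX: "\<And>n i. (\<lambda>\<omega>. f (X n i \<omega>)) \<in> M \<rightarrow>\<^sub>M count_space UNIV"
    using measurable_compose[OF X_meas f_meas] by simp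
  have qs: "\<And>n k. p_n M Y n k * (\<Sum>l\<in>UNIV. q_n M f X Y n k l) = p_n M Y n k"
    by (rule qsum[where X=X, OF M fX Y_meas])
  define cl where "cl n l = (\<Sum>k\<in>UNIV. p_n M Y n k / mu_n M v Y n k * q_n M f X Y n k l)" for n l
  define cp where "cp n = (\<Sum>k\<in>UNIV. p_n M Y n k / mu_n M v Y n k)" for n
  have clsum: "(\<Sum>l\<in>UNIV. cl n l) = cp n" for n
  proof -
    have "(\<Sum>l\<in>UNIV. cl n l) = (\<Sum>k\<in>UNIV. p_n M Y n k / mu_n M v Y n k * (\<Sum>l\<in>UNIV. q_n M f X Y n k l))"
      unfolding cl_def sum_distrib_left by (rule sum.swap)
    also have "\<dots> = cp n" unfolding cp_def
    proof (rule sum.cong[OF refl])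
      fix k
      have "p_n M Y n k / mu_n M v Y n k * (\<Sum>l\<in>UNIV. q_n M f X Y n k l)
          = (p_n M Y n k * (\<Sum>l\<in>UNIV. q_n M f X Y n k l)) / mu_n M v Y n k" by simp
      then show "p_n M Y n k / mu_n M v Y n k * (\<Sum>l\<in>UNIV. q_n M f X Y n k l) = p_n M Y n k / mu_n M v Y n k"
        using qs by simp
    qed
    finally show ?thesis .
  qed
  have lam_lim: "lam_n M u \<longlonglongrightarrow> lam" by (rule sqrt_conv_imp[OF lam_conv])
  have mu_lim: "\<And>k. (\<lambda>n. mu_n M v Y n k) \<longlonglongrightarrow> mu k" by (rule sqrt_conv_imp[OF mu_conv])
  have p_lim: "\<And>k. (\<lambda>n. p_n M Y n k) \<longlonglongrightarrow> p k" by (rule sqrt_conv_imp[OF p_conv])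
  have q_lim: "\<And>k l. (\<lambda>n. q_n M f X Y n k l) \<longlonglongrightarrow> q k l" by (rule sqrt_conv_imp[OF q_conv])
  have cl_lim: "(\<lambda>n. cl n l) \<longlonglongrightarrow> (\<Sum>k\<in>UNIV. p k / mu k * q k l)" for l
    unfolding cl_def
    by (intro tendsto_sum tendsto_mult tendsto_divide p_lim mu_lim q_lim) (use mu_pos in \<open>auto simp: less_imp_neq[symmetric]\<close>)
  have cp_lim: "cp \<longlonglongrightarrow> (\<Sum>k\<in>UNIV. p k / mu k)"
    unfolding cp_def
    by (intro tendsto_sum tendsto_divide p_lim mu_lim) (use mu_pos in \<open>auto simp: less_imp_neq[symmetric]\<close>)
  have lam0: "lam \<ge> 0" using lam_pos by simp
  have part1: "AE \<omega> in M.
        (\<forall>l. uniform_limit {0..1} (\<lambda>n t. Ltil M f u v X Y n l t \<omega>)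
              (\<lambda>t. Rlim l (lam * t) \<omega> + (\<Sum>k\<in>UNIV. p k / mu k * q k l) * A0lim t \<omega>) sequentially)
      \<and> uniform_limit {0..1} (\<lambda>n t. Ltil_plus M f u v X Y n t \<omega>)
              (\<lambda>t. V0lim (lam * t) \<omega> + (\<Sum>k\<in>UNIV. p k / mu k) * A0lim t \<omega>) sequentially"
    using prim_conv
  proof (rule eventually_mono)
    fix \<omega>
    assume H: "(\<forall>T. uniform_limit {0..T} (\<lambda>n t. Atil M u n t \<omega>) (\<lambda>t. A0lim t \<omega>) sequentially)
      \<and> (\<forall>T. uniform_limit {0..T} (\<lambda>n t. V0til M v Y n t \<omega>) (\<lambda>t. V0lim t \<omega>) sequentially)
      \<and> (\<forall>l T. uniform_limit {0..T} (\<lambda>n t. Rtil M f v X Y n l t \<omega>) (\<lambda>t. Rlim l t \<omega>) sequentially)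
      \<and> continuous_on {0..} (\<lambda>t. A0lim t \<omega>)
      \<and> continuous_on {0..} (\<lambda>t. V0lim t \<omega>)
      \<and> (\<forall>l. continuous_on {0..} (\<lambda>t. Rlim l t \<omega>))"
    have A_ul: "uniform_limit {0..1} (\<lambda>n t. Atil M u n t \<omega>) (\<lambda>t. A0lim t \<omega>) sequentially"
      using H by blast
    have sn: "lam_n M u n * t + Atil M u n t \<omega> / sqrt (real n) \<ge> 0" if "n > 0" for n t
      unfolding Atil_def by (rule snn[OF that])
    have L1: "uniform_limit {0..1} (\<lambda>n t. Ltil M f u v X Y n l t \<omega>)
              (\<lambda>t. Rlim l (lam * t) \<omega> + (\<Sum>k\<in>UNIV. p k / mu k * q k l) * A0lim t \<omega>) sequentially" for l
    proof (rule key_ul[where S = "\<lambda>n s. Rtil M f v X Y n l s \<omega>" and At = "\<lambda>n t. Atil M u n t \<omega>"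
          and ln = "lam_n M u" and cn = "\<lambda>n. cl n l"])
      show "\<forall>T. uniform_limit {0..T} (\<lambda>n s. Rtil M f v X Y n l s \<omega>) (\<lambda>t. Rlim l t \<omega>) sequentially"
        using H by blast
      show "continuous_on {0..} (\<lambda>t. Rlim l t \<omega>)" using H by blast
      show "continuous_on {0..} (\<lambda>t. A0lim t \<omega>)" using H by blast
      fix n :: nat and t :: real assume n: "n > 0"
      show "Ltil M f u v X Y n l t \<omega> = Rtil M f v X Y n l (lam_n M u n * t + Atil M u n t \<omega> / sqrt (real n)) \<omega>
          + cl n l * Atil M u n t \<omega>"
        unfolding Ltil_def Rtil_def Atil_def Lhat_def cl_def by (rule ident2[OF n])
    qed (use A_ul lam_lim cl_lim lam0 sn in auto)
    have L2: "uniform_limit {0..1} (\<lambda>n t. Ltil_plus M f u v X Y n t \<omega>)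
              (\<lambda>t. V0lim (lam * t) \<omega> + (\<Sum>k\<in>UNIV. p k / mu k) * A0lim t \<omega>) sequentially"
    proof (rule key_ul[where S = "\<lambda>n s. V0til M v Y n s \<omega>" and At = "\<lambda>n t. Atil M u n t \<omega>"
          and ln = "lam_n M u" and cn = "cp"])
      show "\<forall>T. uniform_limit {0..T} (\<lambda>n s. V0til M v Y n s \<omega>) (\<lambda>t. V0lim t \<omega>) sequentially"
        using H by blast
      show "continuous_on {0..} (\<lambda>t. V0lim t \<omega>)" using H by blast
      show "continuous_on {0..} (\<lambda>t. A0lim t \<omega>)" using H by blast
      fix n :: nat and t :: real assume n: "n > 0"
      have "Ltil_plus M f u v X Y n t \<omega>
          = ((\<Sum>l\<in>UNIV. Lhat f u v X n l (real n * t) \<omega>) - lam_n M u n * (\<Sum>l\<in>UNIV. cl n l) * real n * t) / sqrt (real n)"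
        unfolding Ltil_plus_def Ltil_def cl_def[symmetric] sum_divide_distrib[symmetric] sum_subtractf
        by (simp add: sum_distrib_left sum_distrib_right)
      also have "(\<Sum>l\<in>UNIV. Lhat f u v X n l (real n * t) \<omega>) = (\<Sum>i<A0 u n (real n * t) \<omega>. v n i \<omega>)"
        unfolding Lhat_def by (subst sum.swap) simp
      also have "(\<Sum>l\<in>UNIV. cl n l) = cp n" by (rule clsum)
      finally have eq: "Ltil_plus M f u v X Y n t \<omega> = ((\<Sum>i<A0 u n (real n * t) \<omega>. v n i \<omega>) - lam_n M u n * cp n * real n * t) / sqrt (real n)" .
      show "Ltil_plus M f u v X Y n t \<omega> = V0til M v Y n (lam_n M u n * t + Atil M u n t \<omega> / sqrt (real n)) \<omega>
          + cp n * Atil M u n t \<omega>"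
        unfolding eq V0til_def Atil_def cp_def by (rule ident2[OF n])
    qed (use A_ul lam_lim cp_lim lam0 sn in auto)
    show "(\<forall>l. uniform_limit {0..1} (\<lambda>n t. Ltil M f u v X Y n l t \<omega>)
              (\<lambda>t. Rlim l (lam * t) \<omega> + (\<Sum>k\<in>UNIV. p k / mu k * q k l) * A0lim t \<omega>) sequentially)
      \<and> uniform_limit {0..1} (\<lambda>n t. Ltil_plus M f u v X Y n t \<omega>)
              (\<lambda>t. V0lim (lam * t) \<omega> + (\<Sum>k\<in>UNIV. p k / mu k) * A0lim t \<omega>) sequentially"
      using L1 L2 by blast
  qed
  have part2: "\<forall>\<omega>\<in>space M.
        (\<forall>l. \<exists>r :: nat \<Rightarrow> real \<Rightarrow> real.
           (\<forall>\<epsilon>>0. eventually (\<lambda>n. \<forall>t\<in>{0..1}. \<bar>r n t\<bar> \<le> \<epsilon> * sqrt (real n)) sequentially)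
         \<and> (\<forall>n. \<forall>t\<in>{0..1}. Lhat f u v X n l (real n * t) \<omega>
               = lam_n M u n * (\<Sum>k\<in>UNIV. p_n M Y n k / mu_n M v Y n k * q_n M f X Y n k l) * (real n * t)
                 + sqrt (real n) * Ltil M f u v X Y n l t \<omega> + r n t))
      \<and> (\<exists>r :: nat \<Rightarrow> real \<Rightarrow> real.
           (\<forall>\<epsilon>>0. eventually (\<lambda>n. \<forall>t\<in>{0..1}. \<bar>r n t\<bar> \<le> \<epsilon> * sqrt (real n)) sequentially)
         \<and> (\<forall>n. \<forall>t\<in>{0..1}. Lhat_plus f u v X n (real n * t) \<omega>
               = lam_n M u n * (\<Sum>k\<in>UNIV. p_n M Y n k / mu_n M v Y n k) * (real n * t)
                 + sqrt (real n) * Ltil_plus M f u v X Y n t \<omega> + r n t))"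
  proof (intro ballI conjI allI)
    fix \<omega> l
    define r where "r n t = Lhat f u v X n l (real n * t) \<omega>
               - lam_n M u n * (\<Sum>k\<in>UNIV. p_n M Y n k / mu_n M v Y n k * q_n M f X Y n k l) * (real n * t)
                 - sqrt (real n) * Ltil M f u v X Y n l t \<omega>" for n t
    have r0: "r n t = 0" if "n > 0" for n t
    proof -
      have key: "\<And>Z. sqrt (real n) * (Z / sqrt (real n)) = Z" using that by simp
      show ?thesis unfolding r_def Ltil_def key by (simp add: algebra_simps)
    qed
    show "\<exists>r :: nat \<Rightarrow> real \<Rightarrow> real.
           (\<forall>\<epsilon>>0. eventually (\<lambda>n. \<forall>t\<in>{0..1}. \<bar>r n t\<bar> \<le> \<epsilon> * sqrt (real n)) sequentially)
         \<and> (\<forall>n. \<forall>t\<in>{0..1}. Lhat f u v X n l (real n * t) \<omega>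
               = lam_n M u n * (\<Sum>k\<in>UNIV. p_n M Y n k / mu_n M v Y n k * q_n M f X Y n k l) * (real n * t)
                 + sqrt (real n) * Ltil M f u v X Y n l t \<omega> + r n t)"
    proof (intro exI conjI allI impI ballI)
      fix \<epsilon> :: real assume eps: "\<epsilon> > 0"
      show "eventually (\<lambda>n. \<forall>t\<in>{0..1}. \<bar>r n t\<bar> \<le> \<epsilon> * sqrt (real n)) sequentially"
        using eventually_gt_at_top[of "0::nat"] by eventually_elim (use eps in \<open>simp add: r0\<close>)
    qed (simp add: r_def)
  next
    fix \<omega>
    define r where "r n t = Lhat_plus f u v X n (real n * t) \<omega>
               - lam_n M u n * (\<Sum>k\<in>UNIV. p_n M Y n k / mu_n M v Y n k) * (real n * t)
                 - sqrt (real n) * Ltil_plus M f u v X Y n t \<omega>" for n t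
    have r0: "r n t = 0" if "n > 0" for n t
    proof -
      have eq: "Ltil_plus M f u v X Y n t \<omega>
          = (Lhat_plus f u v X n (real n * t) \<omega> - lam_n M u n * (\<Sum>l\<in>UNIV. cl n l) * real n * t) / sqrt (real n)"
        unfolding Ltil_plus_def Ltil_def cl_def[symmetric] Lhat_plus_def sum_divide_distrib[symmetric] sum_subtractf
        by (simp add: sum_distrib_left sum_distrib_right)
      have key: "\<And>Z. sqrt (real n) * (Z / sqrt (real n)) = Z" using that by simp
      show ?thesis unfolding r_def eq key clsum cp_def by (simp add: algebra_simps)
    qed
    show "\<exists>r :: nat \<Rightarrow> real \<Rightarrow> real.
           (\<forall>\<epsilon>>0. eventually (\<lambda>n. \<forall>t\<in>{0..1}. \<bar>r n t\<bar> \<le> \<epsilon> * sqrt (real n)) sequentially)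
         \<and> (\<forall>n. \<forall>t\<in>{0..1}. Lhat_plus f u v X n (real n * t) \<omega>
               = lam_n M u n * (\<Sum>k\<in>UNIV. p_n M Y n k / mu_n M v Y n k) * (real n * t)
                 + sqrt (real n) * Ltil_plus M f u v X Y n t \<omega> + r n t)"
    proof (intro exI conjI allI impI ballI)
      fix \<epsilon> :: real assume eps: "\<epsilon> > 0"
      show "eventually (\<lambda>n. \<forall>t\<in>{0..1}. \<bar>r n t\<bar> \<le> \<epsilon> * sqrt (real n)) sequentially"
        using eventually_gt_at_top[of "0::nat"] by eventually_elim (use eps in \<open>simp add: r0\<close>)
    qed (simp add: r_def)
  qed
  show ?thesis using part1 part2 by blast
qed

end
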